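(* Let $n\ge 2$ and let $P(z)=\sum_{j=0}^{2n}p_jz^j$ be a polynomial with real coefficients, $p_{2n}\neq 0$, which is self-reciprocal, i.e. $p_j=p_{2n-j}$ for $j=0,\dots,2n$. Put $$C_n(x)=p_{2n}T_n(x)+p_{2n-1}T_{n-1}(x)+\cdots+p_{n+1}T_1(x)+\tfrac{p_n}{2}T_0(x),$$ so that $P(z)=2z^nC_n(x)$ with $x=\tfrac12\left(z+\tfrac1z\right)$. For each kind $\alpha\in\{T,U,V,W\}$, with $Q^{\alpha}_m$ denoting the Chebyshev polynomial of degree $m$ of that kind ($Q^T=T,\ Q^U=U,\ Q^V=V,\ Q^W=W$), define the class $\mathcal{P}_\alpha$ of such polynomials $P$ by: 1. $\mathcal{P}_T$: $p_{2n-2}=p_{2n-3}=\cdots=p_n=0$ and $p_{2n}p_{2n-1}\neq 0$; 2. $\mathcal{P}_U$: $p_j=p_{2n}$ for every even $j$ with $n\le j\le 2n$, $p_j=p_{2n-1}$ for every odd $j$ with $n\le j\le 2n$, and $p_{2n}p_{2n-1}\ne 0$; 3. $\mathcal{P}_V$: $p_{2n-k}=(-1)^{k-1}p_{2n-1}$ for $k=1,\dots,n$ (i.e. $p_{2n-1}=-p_{2n-2}=p_{2n-3}=\cdots=(-1)^np_{n+1}=(-1)^{n-1}p_n$), $p_{2n}\neq0$ and $p_{2n}\neq -p_{2n-1}$; 4. $\mathcal{P}_W$: $p_{2n-1}=p_{2n-2}=\cdots=p_n$, $p_{2n}\ne 0$ and $p_{2n}\neq p_{2n-1}$. Then for each $\alpha$,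 $P\in\mathcal{P}_\alpha$ if and only if $C_n(x)=c_0Q^\alpha_n(x)+c_1Q^\alpha_{n-1}(x)$ for some real $c_0,c_1$ with $c_0c_1\neq 0$ (i.e. $C_n$ is a Chebyshev quasi-orthogonal polynomial of order one of kind $\alpha$). Explicitly, for $P$ in the respective class: $C_n=p_{2n}T_n+p_{2n-1}T_{n-1}$; $C_n=\tfrac{p_{2n}}2U_n+\tfrac{p_{2n-1}}2U_{n-1}$; $C_n=\tfrac{p_{2n}}2V_n+\tfrac{p_{2n}+p_{2n-1}}2V_{n-1}$; $C_n=\tfrac{p_{2n}}2W_n+\tfrac{p_{2n-1}-p_{2n}}2W_{n-1}$.
   Context: Chebyshev polynomials of degree $m$ of the first, second, third and fourth kinds are defined, for $x=\cos\theta$, by $T_m(x)=\cos m\theta$, $U_m(x)=\frac{\sin(m+1)\theta}{\sin\theta}$, $V_m(x)=\frac{\cos(m+\frac12)\theta}{\cos\frac12\theta}$, $W_m(x)=\frac{\sin(m+\frac12)\theta}{\sin\frac12\theta}$. A polynomial of degree $n$ is called quasi-orthogonal of order one with respect to an orthogonal family $\{Q_m\}$ if it equals $c_0Q_n+c_1Q_{n-1}$ with $c_0c_1\neq0$. *)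

theory Defs
  imports "HOL-Computational_Algebra.Polynomial" Complex_Main
begin

text \<open>Chebyshev polynomials of the four kinds, via the standard three-term recurrence
  Q_{m+2} = 2x Q_{m+1} - Q_m with Q_0 = 1 and
  T_1 = x, U_1 = 2x, V_1 = 2x - 1, W_1 = 2x + 1.
  These are exactly the polynomials with T_m(cos t) = cos(m t),
  U_m(cos t) = sin((m+1)t)/sin t, V_m(cos t) = cos((m+1/2)t)/cos(t/2),
  W_m(cos t) = sin((m+1/2)t)/sin(t/2).\<close>

fun chebT :: "nat \<Rightarrow> real poly" where
  "chebT 0 = 1"
| "chebT (Suc 0) = [:0, 1:]"
| "chebT (Suc (Suc m)) = [:0, 2:] * chebT (Suc m) - chebT m"

fun chebU :: "nat \<Rightarrow> real poly" where
  "chebU 0 = 1"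
| "chebU (Suc 0) = [:0, 2:]"
| "chebU (Suc (Suc m)) = [:0, 2:] * chebU (Suc m) - chebU m"

fun chebV :: "nat \<Rightarrow> real poly" where
  "chebV 0 = 1"
| "chebV (Suc 0) = [:-1, 2:]"
| "chebV (Suc (Suc m)) = [:0, 2:] * chebV (Suc m) - chebV m"

fun chebW :: "nat \<Rightarrow> real poly" where
  "chebW 0 = 1"
| "chebW (Suc 0) = [:1, 2:]"
| "chebW (Suc (Suc m)) = [:0, 2:] * chebW (Suc m) - chebW m"

definition quasi_orth1 :: "(nat \<Rightarrow> real poly) \<Rightarrow> nat \<Rightarrow> real poly \<Rightarrow> bool" where
  "quasi_orth1 Q n C \<longleftrightarrow>
     (\<exists>c0 c1 :: real. c0 * c1 \<noteq> 0 \<and> C = smult c0 (Q n) + smult c1 (Q (n - 1)))"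

definition chebC :: "real poly \<Rightarrow> nat \<Rightarrow> real poly" where
  "chebC P n = (\<Sum>k=1..n. smult (coeff P (n + k)) (chebT k)) + smult (coeff P n / 2) (chebT 0)"

definition self_reciprocal :: "real poly \<Rightarrow> nat \<Rightarrow> bool" where
  "self_reciprocal P n \<longleftrightarrow> (\<forall>j\<le>2*n. coeff P j = coeff P (2*n - j))"

definition classT :: "real poly \<Rightarrow> nat \<Rightarrow> bool" where
  "classT P n \<longleftrightarrow> (\<forall>j. n \<le> j \<and> j \<le> 2*n - 2 \<longrightarrow> coeff P j = 0)
      \<and> coeff P (2*n) * coeff P (2*n - 1) \<noteq> 0"

definition classU :: "real poly \<Rightarrow> nat \<Rightarrow> bool" where
  "classU P n \<longleftrightarrow> (\<forall>j. n \<le> j \<and> j \<le> 2*n \<longrightarrow>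
        (even j \<longrightarrow> coeff P j = coeff P (2*n)) \<and> (odd j \<longrightarrow> coeff P j = coeff P (2*n - 1)))
      \<and> coeff P (2*n) * coeff P (2*n - 1) \<noteq> 0"

definition classV :: "real poly \<Rightarrow> nat \<Rightarrow> bool" where
  "classV P n \<longleftrightarrow> (\<forall>k. 1 \<le> k \<and> k \<le> n \<longrightarrow> coeff P (2*n - k) = (-1) ^ (k - 1) * coeff P (2*n - 1))
      \<and> coeff P (2*n) \<noteq> 0 \<and> coeff P (2*n) \<noteq> - coeff P (2*n - 1)"

definition classW :: "real poly \<Rightarrow> nat \<Rightarrow> bool" where
  "classW P n \<longleftrightarrow> (\<forall>j. n \<le> j \<and> j \<le> 2*n - 1 \<longrightarrow> coeff P j = coeff P (2*n - 1))
      \<and> coeff P (2*n) \<noteq> 0 \<and> coeff P (2*n) \<noteq> coeff P (2*n - 1)"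

end

theory Submission
  imports Defs
begin


definition S :: "(nat \<Rightarrow> real) \<Rightarrow> nat \<Rightarrow> real poly" where
  "S a n = (\<Sum>k=1..n. smult (a k) (chebT k)) + smult (a 0 / 2) (chebT 0)"

lemma S_0: "S a 0 = [:a 0 / 2:]" by (simp add: S_def)

lemma S_Suc: "S a (Suc n) = S a n + smult (a (Suc n)) (chebT (Suc n))"
  by (simp add: S_def)

lemma S_cong: "(\<And>k. k \<le> n \<Longrightarrow> a k = b k) \<Longrightarrow> S a n = S b n"
  by (induction n) (auto simp: S_0 S_Suc)

lemma S_add: "S (\<lambda>k. a k + b k) n = S a n + S b n"
  by (induction n) (auto simp: S_0 S_Suc smult_add_left add_divide_distrib)

lemma S_smult: "S (\<lambda>k. c * a k) n = smult c (S a n)"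
  by (induction n) (auto simp: S_0 S_Suc smult_add_right)

lemma S_zero: "(\<And>k. k \<le> n \<Longrightarrow> a k = 0) \<Longrightarrow> S a n = 0"
  by (induction n) (auto simp: S_0 S_Suc)

lemma S_extend: "m \<le> n \<Longrightarrow> (\<And>k. k > m \<Longrightarrow> a k = 0) \<Longrightarrow> S a n = S a m"
  by (induction n) (auto simp: S_Suc le_Suc_eq)

lemma chebT_deg_coeff: "degree (chebT m) \<le> m \<and> coeff (chebT m) m = (if m = 0 then 1 else 2^(m-1))"
proof (induction m rule: chebT.induct)
  case 1 then show ?case by simp
next
  case 2 then show ?case by simp
next
  case (3 m)
  have e: "[:0, 2:] * p = pCons 0 (smult 2 p)" for p :: "real poly" by simp
  have d: "degree ([:0, 2:] * chebT (Suc m)) \<le> Suc (Suc m)"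
    unfolding e using 3 by (auto simp: degree_pCons_eq_if)
  have d2: "degree (chebT m) \<le> Suc (Suc m)" using 3 by simp
  have "degree (chebT (Suc (Suc m))) \<le> Suc (Suc m)"
    using degree_diff_le[OF d d2] by simp
  moreover have "coeff (chebT m) (Suc (Suc m)) = 0" using 3 by (simp add: coeff_eq_0)
  ultimately show ?case using 3 by (simp add: e)
qed

lemma coeff_S_high: "j > n \<Longrightarrow> coeff (S a n) j = 0"
proof (induction n)
  case 0 then show ?case by (simp add: S_0 coeff_pCons split: nat.split)
next
  case (Suc n)
  have "coeff (chebT (Suc n)) j = 0" using chebT_deg_coeff[of "Suc n"] Suc.prems
    by (intro coeff_eq_0) linarith
  then show ?case using Suc by (simp add: S_Suc)
qed

lemma S_eq0: "S a n = 0 \<Longrightarrow> k \<le> n \<Longrightarrow> a k = 0"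
proof (induction n arbitrary: k)
  case 0 then show ?case by (simp add: S_0)
next
  case (Suc n)
  have "coeff (S a (Suc n)) (Suc n) = a (Suc n) * 2 ^ n"
    using chebT_deg_coeff[of "Suc n"] by (simp add: S_Suc coeff_S_high)
  then have an: "a (Suc n) = 0" using Suc.prems by simp
  then have "S a n = 0" using Suc.prems by (simp add: S_Suc)
  then show ?case using Suc an by (cases "k = Suc n") auto
qed

lemma S_inj: "S a n = S b n \<Longrightarrow> k \<le> n \<Longrightarrow> a k = b k"
proof -
  assume "S a n = S b n" "k \<le> n"
  have "S (\<lambda>k. a k + (-1) * b k) n = S a n + smult (-1) (S b n)"
    by (simp only: S_add S_smult)
  then have "S (\<lambda>k. a k + (-1) * b k) n = 0"
    using \<open>S a n = S b n\<close> by simp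
  from S_eq0[OF this \<open>k \<le> n\<close>] show ?thesis by simp
qed

lemma rec_unique:
  fixes f g :: "nat \<Rightarrow> real poly"
  assumes "f 0 = g 0" "f 1 = g 1"
    and "\<And>m. f (Suc (Suc m)) = [:0, 2:] * f (Suc m) - f m"
    and "\<And>m. g (Suc (Suc m)) = [:0, 2:] * g (Suc m) - g m"
  shows "f m = g m"
proof -
  have "f m = g m \<and> f (Suc m) = g (Suc m)"
    by (induction m) (use assms in auto)
  then show ?thesis by simp
qed

lemma U_T: "chebU (Suc (Suc m)) - chebU m = (\<lambda>x. smult 2 (chebT (Suc (Suc x)))) m"
proof (rule rec_unique[of "\<lambda>x. chebU (Suc (Suc x)) - chebU x" "\<lambda>x. smult 2 (chebT (Suc (Suc x)))"])
  fix x
  show "chebU (Suc (Suc (Suc (Suc x)))) - chebU (Suc (Suc x)) =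
    [:0, 2:] * (chebU (Suc (Suc (Suc x))) - chebU (Suc x)) - (chebU (Suc (Suc x)) - chebU x)"
    unfolding chebU.simps(3)[of "Suc (Suc x)"] chebU.simps(3)[of x] by (simp del: chebT.simps chebU.simps chebV.simps chebW.simps mult_pCons_left mult_pCons_right add: algebra_simps smult_diff_right smult_add_right)
  show "(\<lambda>x. smult 2 (chebT (Suc (Suc x)))) (Suc (Suc x)) = [:0, 2:] * (\<lambda>x. smult 2 (chebT (Suc (Suc x)))) (Suc x) - (\<lambda>x. smult 2 (chebT (Suc (Suc x)))) x"
    unfolding chebT.simps(3)[of "Suc (Suc x)"] chebT.simps(3)[of "Suc x"] smult_diff_right smult_add_right
    by (simp del: chebT.simps chebU.simps chebV.simps chebW.simps mult_pCons_left mult_pCons_right add: algebra_simps smult_diff_right smult_add_right)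
qed (simp_all add: numeral_2_eq_2 one_pCons numeral_poly)

lemma V_T: "chebV (Suc (Suc m)) - chebV m = (\<lambda>x. smult 2 (chebT (Suc (Suc x)) - chebT (Suc x))) m"
proof (rule rec_unique[of "\<lambda>x. chebV (Suc (Suc x)) - chebV x" "\<lambda>x. smult 2 (chebT (Suc (Suc x)) - chebT (Suc x))"])
  fix x
  show "chebV (Suc (Suc (Suc (Suc x)))) - chebV (Suc (Suc x)) =
    [:0, 2:] * (chebV (Suc (Suc (Suc x))) - chebV (Suc x)) - (chebV (Suc (Suc x)) - chebV x)"
    unfolding chebV.simps(3)[of "Suc (Suc x)"] chebV.simps(3)[of x] by (simp del: chebT.simps chebU.simps chebV.simps chebW.simps mult_pCons_left mult_pCons_right add: algebra_simps smult_diff_right smult_add_right)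
  show "(\<lambda>x. smult 2 (chebT (Suc (Suc x)) - chebT (Suc x))) (Suc (Suc x)) = [:0, 2:] * (\<lambda>x. smult 2 (chebT (Suc (Suc x)) - chebT (Suc x))) (Suc x) - (\<lambda>x. smult 2 (chebT (Suc (Suc x)) - chebT (Suc x))) x"
    unfolding chebT.simps(3)[of "Suc (Suc x)"] chebT.simps(3)[of "Suc x"] smult_diff_right smult_add_right
    by (simp del: chebT.simps chebU.simps chebV.simps chebW.simps mult_pCons_left mult_pCons_right add: algebra_simps smult_diff_right smult_add_right)
qed (simp_all add: numeral_2_eq_2 one_pCons numeral_poly)

lemma W_T: "chebW (Suc (Suc m)) - chebW m = (\<lambda>x. smult 2 (chebT (Suc (Suc x)) + chebT (Suc x))) m"
proof (rule rec_unique[of "\<lambda>x. chebW (Suc (Suc x)) - chebW x" "\<lambda>x. smult 2 (chebT (Suc (Suc x)) + chebT (Suc x))"])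
  fix x
  show "chebW (Suc (Suc (Suc (Suc x)))) - chebW (Suc (Suc x)) =
    [:0, 2:] * (chebW (Suc (Suc (Suc x))) - chebW (Suc x)) - (chebW (Suc (Suc x)) - chebW x)"
    unfolding chebW.simps(3)[of "Suc (Suc x)"] chebW.simps(3)[of x] by (simp del: chebT.simps chebU.simps chebV.simps chebW.simps mult_pCons_left mult_pCons_right add: algebra_simps smult_diff_right smult_add_right)
  show "(\<lambda>x. smult 2 (chebT (Suc (Suc x)) + chebT (Suc x))) (Suc (Suc x)) = [:0, 2:] * (\<lambda>x. smult 2 (chebT (Suc (Suc x)) + chebT (Suc x))) (Suc x) - (\<lambda>x. smult 2 (chebT (Suc (Suc x)) + chebT (Suc x))) x"
    unfolding chebT.simps(3)[of "Suc (Suc x)"] chebT.simps(3)[of "Suc x"] smult_diff_right smult_add_right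
    by (simp del: chebT.simps chebU.simps chebV.simps chebW.simps mult_pCons_left mult_pCons_right add: algebra_simps smult_diff_right smult_add_right)
qed (simp_all add: numeral_2_eq_2 one_pCons numeral_poly)


definition ta :: "nat \<Rightarrow> nat \<Rightarrow> real" where "ta m k = (if k = m then (if m = 0 then 2 else 1) else (0::real))"
definition ua :: "nat \<Rightarrow> nat \<Rightarrow> real" where "ua m k = (if k \<le> m \<and> even (m - k) then 2 else (0::real))"
definition va :: "nat \<Rightarrow> nat \<Rightarrow> real" where "va m k = (if k \<le> m then 2 * (-1) ^ (m - k) else (0::real))"
definition wa :: "nat \<Rightarrow> nat \<Rightarrow> real" where "wa m k = (if k \<le> m then 2 else (0::real))"

lemma T_S: "chebT m = S (ta m) m"
proof (cases m)
  case 0 then show ?thesis by (simp add: S_0 ta_def)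
next
  case (Suc j)
  have "S (ta m) j = 0" by (rule S_zero) (simp add: ta_def Suc)
  then show ?thesis by (simp add: Suc S_Suc ta_def)
qed

lemma U_S: "chebU m = S (ua m) m"
proof -
  have "chebU m = S (ua m) m \<and> chebU (Suc m) = S (ua (Suc m)) (Suc m)"
  proof (induction m)
    case 0 then show ?case by (simp add: S_0 S_Suc ua_def one_pCons numeral_poly)
  next
    case (Suc m)
    have "S (ua (Suc (Suc m))) m = S (ua m) m" by (rule S_cong) (auto simp: ua_def)
    then have "S (ua (Suc (Suc m))) (Suc (Suc m)) = chebU m + smult 2 (chebT (Suc (Suc m)))"
      using Suc by (simp add: S_Suc ua_def[of "Suc (Suc m)" "Suc m"] ua_def[of "Suc (Suc m)" "Suc (Suc m)"])
    also have "\<dots> = chebU (Suc (Suc m))" using U_T[of m] by (simp del: chebT.simps chebU.simps chebV.simps chebW.simps add: algebra_simps smult_add_right smult_diff_right)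
    finally show ?case using Suc by simp
  qed
  then show ?thesis by simp
qed

lemma V_S: "chebV m = S (va m) m"
proof -
  have "chebV m = S (va m) m \<and> chebV (Suc m) = S (va (Suc m)) (Suc m)"
  proof (induction m)
    case 0 then show ?case by (simp add: S_0 S_Suc va_def one_pCons numeral_poly)
  next
    case (Suc m)
    have "S (va (Suc (Suc m))) m = S (va m) m" by (rule S_cong) (auto simp: va_def Suc_diff_le)
    then have "S (va (Suc (Suc m))) (Suc (Suc m)) = chebV m + smult (-2) (chebT (Suc m)) + smult 2 (chebT (Suc (Suc m)))"
      using Suc by (simp add: S_Suc va_def[of "Suc (Suc m)" "Suc m"] va_def[of "Suc (Suc m)" "Suc (Suc m)"])
    also have "\<dots> = chebV (Suc (Suc m))" using V_T[of m] by (simp del: chebT.simps chebU.simps chebV.simps chebW.simps add: algebra_simps smult_diff_right)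
    finally show ?case using Suc by simp
  qed
  then show ?thesis by simp
qed

lemma W_S: "chebW m = S (wa m) m"
proof -
  have "chebW m = S (wa m) m \<and> chebW (Suc m) = S (wa (Suc m)) (Suc m)"
  proof (induction m)
    case 0 then show ?case by (simp add: S_0 S_Suc wa_def one_pCons numeral_poly)
  next
    case (Suc m)
    have "S (wa (Suc (Suc m))) m = S (wa m) m" by (rule S_cong) (auto simp: wa_def)
    then have "S (wa (Suc (Suc m))) (Suc (Suc m)) = chebW m + smult 2 (chebT (Suc m)) + smult 2 (chebT (Suc (Suc m)))"
      using Suc by (simp add: S_Suc wa_def[of "Suc (Suc m)" "Suc m"] wa_def[of "Suc (Suc m)" "Suc (Suc m)"])
    also have "\<dots> = chebW (Suc (Suc m))" using W_T[of m] by (simp del: chebT.simps chebU.simps chebV.simps chebW.simps add: algebra_simps smult_add_right)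
    finally show ?case using Suc by simp
  qed
  then show ?thesis by simp
qed


lemma qo_comb:
  assumes QS: "\<And>m. Q m = S (qa m) m" and z: "\<And>m k. m < k \<Longrightarrow> qa m k = 0"
  shows "smult c0 (Q n) + smult c1 (Q (n - 1)) = S (\<lambda>k. c0 * qa n k + c1 * qa (n - 1) k) n"
proof -
  have "Q (n - 1) = S (qa (n - 1)) n"
    using S_extend[of "n - 1" n "qa (n - 1)"] z QS by simp
  then show ?thesis by (simp add: QS[of n] S_add S_smult)
qed

lemma qo_S:
  assumes QS: "\<And>m. Q m = S (qa m) m" and z: "\<And>m k. m < k \<Longrightarrow> qa m k = 0"
  shows "quasi_orth1 Q n (S a n) \<longleftrightarrow>
    (\<exists>c0 c1. c0 * c1 \<noteq> 0 \<and> (\<forall>k\<le>n. a k = c0 * qa n k + c1 * qa (n - 1) k))"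
proof -
  have e: "S a n = S (\<lambda>k. c0 * qa n k + c1 * qa (n - 1) k) n \<longleftrightarrow> (\<forall>k\<le>n. a k = c0 * qa n k + c1 * qa (n - 1) k)"
    for c0 c1
  proof
    assume "S a n = S (\<lambda>k. c0 * qa n k + c1 * qa (n - 1) k) n"
    then show "\<forall>k\<le>n. a k = c0 * qa n k + c1 * qa (n - 1) k" using S_inj by blast
  next
    assume "\<forall>k\<le>n. a k = c0 * qa n k + c1 * qa (n - 1) k"
    then show "S a n = S (\<lambda>k. c0 * qa n k + c1 * qa (n - 1) k) n" by (intro S_cong) auto
  qed
  show ?thesis by (simp only: quasi_orth1_def qo_comb[OF assms] e)
qed

lemma chebC_S: "chebC P n = S (\<lambda>k. coeff P (n + k)) n"
  by (simp add: chebC_def S_def)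



lemma T_fwd:
  assumes n: "n \<ge> 2" and c: "classT P n"
  shows "coeff P (2*n) * coeff P (2*n-1) \<noteq> 0 \<and> (\<forall>k\<le>n. coeff P (n + k) = coeff P (2*n) * ta n k + coeff P (2*n-1) * ta (n - 1) k)"
proof -
  have z: "\<And>j. n \<le> j \<Longrightarrow> j \<le> 2*n - 2 \<Longrightarrow> coeff P j = 0" and nz: "coeff P (2*n) * coeff P (2*n-1) \<noteq> 0"
    using c unfolding classT_def by auto
  have "coeff P (n + k) = coeff P (2*n) * ta n k + coeff P (2*n-1) * ta (n - 1) k" if "k \<le> n" for k
  proof -
    have "k = n \<or> k = n - 1 \<or> k \<le> n - 2" using that n by linarith
    then consider "k = n" | "k = n - 1" | "k \<le> n - 2" by blast
    then show ?thesis
    proof cases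
      case 1
      then have "n + k = 2*n" by simp
      moreover have "ta n k = 1" "ta (n-1) k = 0" using 1 n by (auto simp: ta_def)
      ultimately show ?thesis by (simp add: mult_2)
    next
      case 2
      then have "n + k = 2*n - 1" using n by simp
      then show ?thesis using 2 n by (simp add: ta_def)
    next
      case 3
      then have "coeff P (n + k) = 0" using z[of "n+k"] n by simp
      moreover have "ta n k = 0" "ta (n-1) k = 0" using 3 n by (auto simp: ta_def)
      ultimately show ?thesis by simp
    qed
  qed
  then show ?thesis using nz by blast
qed

lemma T_bwd:
  assumes n: "n \<ge> 2" and c: "c0 * c1 \<noteq> 0" and h: "\<forall>k\<le>n. coeff P (n + k) = c0 * ta n k + c1 * ta (n - 1) k"
  shows "classT P n"
proof -
  have "coeff P (n + n) = c0" using n h[rule_format, of n] by (simp add: ta_def)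
  then have a: "coeff P (2*n) = c0" by (simp add: mult_2)
  have "coeff P (n + (n-1)) = c1" using n h[rule_format, of "n-1"] by (simp add: ta_def)
  moreover have "n + (n - 1) = 2*n - 1" using n by simp
  ultimately have b: "coeff P (2*n-1) = c1" by simp
  have "coeff P j = 0" if "n \<le> j" "j \<le> 2*n-2" for j
  proof -
    have "ta n (j - n) = 0" "ta (n-1) (j - n) = 0" using n that by (auto simp: ta_def)
    then have "coeff P (n + (j - n)) = 0" using n that h[rule_format, of "j - n"] by simp
    then show ?thesis using that by simp
  qed
  then show ?thesis using a b c by (simp add: classT_def)
qed


lemma ua_n: "k \<le> n \<Longrightarrow> ua n k = (if even (n + k) then 2 else 0)"
proof -
  assume k: "k \<le> n"
  have "n + k = (n - k) + 2 * (k::nat)" using k by simp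
  then have "even (n + k) \<longleftrightarrow> even (n - k)" by simp
  then show ?thesis using k by (simp add: ua_def)
qed

lemma ua_n1: "k \<le> n \<Longrightarrow> 1 \<le> n \<Longrightarrow> ua (n - 1) k = (if odd (n + k) then 2 else 0)"
proof -
  assume k: "k \<le> n" and n: "1 \<le> n"
  show ?thesis
  proof (cases "k = n")
    case True
    then have "\<not> n \<le> n - 1" using n by simp
    then show ?thesis using True by (simp add: ua_def)
  next
    case False
    then have "n + k = Suc ((n - 1 - k) + 2 * k)" using k n by simp
    then have "odd (n + k) \<longleftrightarrow> even (n - 1 - k)" by simp
    moreover have "k \<le> n - 1" using k False by simp
    ultimately show ?thesis by (simp add: ua_def)
  qed
qed


lemma ua_n1S: "k \<le> n \<Longrightarrow> 1 \<le> n \<Longrightarrow> ua (n - Suc 0) k = (if odd (n + k) then 2 else 0)"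
  using ua_n1[of k n] by simp

lemma va_n: "k \<le> n \<Longrightarrow> va n k = 2 * (-1) ^ (n - k)"
  by (simp add: va_def)

lemma va_n1: "k \<le> n \<Longrightarrow> 1 \<le> n \<Longrightarrow> va (n - 1) k = (if k = n then 0 else - 2 * (-1) ^ (n - k))"
proof -
  assume k: "k \<le> n" and n: "1 \<le> n"
  show ?thesis
  proof (cases "k = n")
    case True then show ?thesis using n by (simp add: va_def)
  next
    case False
    then have "n - k = Suc (n - 1 - k)" using k n by simp
    then show ?thesis using False k by (simp add: va_def)
  qed
qed


lemma va_n1S: "k \<le> n \<Longrightarrow> 1 \<le> n \<Longrightarrow> va (n - Suc 0) k = (if k = n then 0 else - 2 * (-1) ^ (n - k))"
  using va_n1[of k n] by simp

lemma wa_n: "k \<le> n \<Longrightarrow> wa n k = 2" by (simp add: wa_def)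

lemma wa_n1: "k \<le> n \<Longrightarrow> 1 \<le> n \<Longrightarrow> wa (n - 1) k = (if k = n then 0 else 2)"
  unfolding wa_def by auto


lemma wa_n1S: "k \<le> n \<Longrightarrow> 1 \<le> n \<Longrightarrow> wa (n - Suc 0) k = (if k = n then 0 else 2)"
  using wa_n1[of k n] by simp

lemma U_fwd:
  assumes n: "n \<ge> 2" and c: "classU P n"
  shows "coeff P (2*n) / 2 * (coeff P (2*n-1) / 2) \<noteq> 0 \<and> (\<forall>k\<le>n. coeff P (n + k) = coeff P (2*n) / 2 * ua n k + coeff P (2*n-1) / 2 * ua (n - 1) k)"
proof -
  have h: "\<And>j. n \<le> j \<Longrightarrow> j \<le> 2*n \<Longrightarrow> (even j \<longrightarrow> coeff P j = coeff P (2*n)) \<and> (odd j \<longrightarrow> coeff P j = coeff P (2*n-1))"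
    and nz: "coeff P (2*n) * coeff P (2*n-1) \<noteq> 0"
    using c unfolding classU_def by blast+
  have "coeff P (n + k) = coeff P (2*n) / 2 * ua n k + coeff P (2*n-1) / 2 * ua (n - 1) k" if "k \<le> n" for k
  proof (cases "even (n + k)")
    case True
    then have "coeff P (n + k) = coeff P (2*n)" using h[of "n + k"] that by simp
    moreover have "ua n k = 2" "ua (n - 1) k = 0" using True that n by (simp_all add: ua_n ua_n1 ua_n1S)
    ultimately show ?thesis by simp
  next
    case False
    then have "coeff P (n + k) = coeff P (2*n-1)" using h[of "n + k"] that by simp
    moreover have "ua n k = 0" "ua (n - 1) k = 2" using False that n by (simp_all add: ua_n ua_n1 ua_n1S)
    ultimately show ?thesis by simp
  qed
  then show ?thesis using nz by simp
qed

lemma U_bwd: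
  assumes n: "n \<ge> 2" and c: "c0 * c1 \<noteq> 0" and h: "\<forall>k\<le>n. coeff P (n + k) = c0 * ua n k + c1 * ua (n - 1) k"
  shows "classU P n"
proof -
  have "coeff P (n + n) = 2 * c0" using n h[rule_format, of n] by (simp add: ua_n ua_n1 ua_n1S)
  then have a: "coeff P (2*n) = 2 * c0" by (metis mult_2)
  have e: "n + (n - 1) = 2*n - 1" using n by simp
  have "odd (2*n - 1)" using n by simp
  then have "coeff P (n + (n-1)) = 2 * c1" using n h[rule_format, of "n-1"] e by (simp add: ua_n ua_n1 ua_n1S)
  then have b: "coeff P (2*n-1) = 2 * c1" using e by simp
  have "(even j \<longrightarrow> coeff P j = coeff P (2*n)) \<and> (odd j \<longrightarrow> coeff P j = coeff P (2*n-1))"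
    if "n \<le> j" "j \<le> 2*n" for j
  proof -
    have "j - n \<le> n" using that by simp
    then have "coeff P (n + (j - n)) = c0 * ua n (j - n) + c1 * ua (n - 1) (j - n)" using h by blast
    moreover have "n + (j - n) = j" using that by simp
    moreover have "ua n (j - n) = (if even j then 2 else 0)" "ua (n - 1) (j - n) = (if odd j then 2 else 0)"
      using that n by (simp_all add: ua_n ua_n1 ua_n1S)
    ultimately show ?thesis using a b by auto
  qed
  then show ?thesis using a b c by (simp add: classU_def)
qed

lemma V_fwd:
  assumes n: "n \<ge> 2" and c: "classV P n"
  shows "coeff P (2*n) / 2 * ((coeff P (2*n) + coeff P (2*n-1)) / 2) \<noteq> 0 \<and> (\<forall>k\<le>n. coeff P (n + k) = coeff P (2*n) / 2 * va n k + (coeff P (2*n) + coeff P (2*n-1)) / 2 * va (n - 1) k)"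
proof -
  have h: "\<And>k. 1 \<le> k \<Longrightarrow> k \<le> n \<Longrightarrow> coeff P (2*n - k) = (-1) ^ (k - 1) * coeff P (2*n - 1)"
    and nz: "coeff P (2*n) \<noteq> 0" "coeff P (2*n) \<noteq> - coeff P (2*n - 1)"
    using c unfolding classV_def by blast+
  have "coeff P (n + k) = coeff P (2*n) / 2 * va n k + (coeff P (2*n) + coeff P (2*n-1)) / 2 * va (n - 1) k" if "k \<le> n" for k
  proof (cases "k = n")
    case True then show ?thesis using n by (simp add: va_n va_n1 va_n1S mult_2)
  next
    case False
    then have k: "k < n" using that by simp
    have "coeff P (2*n - (n - k)) = (-1) ^ (n - k - 1) * coeff P (2*n - 1)" using h[of "n - k"] k by simp
    moreover have "2*n - (n - k) = n + k" using k by simp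
    moreover have "(-1::real) ^ (n - k) = - ((-1) ^ (n - k - 1))"
    proof -
      have "n - k = Suc (n - k - 1)" using k by simp
      then show ?thesis by (metis power_Suc mult_minus1)
    qed
    ultimately show ?thesis using k n by (simp add: va_n va_n1 algebra_simps)
  qed
  moreover have "coeff P (2*n) + coeff P (2*n-1) \<noteq> 0" using nz by linarith
  ultimately show ?thesis using nz by simp
qed

lemma V_bwd:
  assumes n: "n \<ge> 2" and c: "c0 * c1 \<noteq> 0" and h: "\<forall>k\<le>n. coeff P (n + k) = c0 * va n k + c1 * va (n - 1) k"
  shows "classV P n"
proof -
  have "coeff P (n + n) = 2 * c0" using n h[rule_format, of n] by (simp add: va_n va_n1 va_n1S)
  then have a: "coeff P (2*n) = 2 * c0" by (metis mult_2)
  have e: "n + (n - 1) = 2*n - 1" using n by simp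
  have "n - (n - 1) = 1" using n by simp
  then have "coeff P (n + (n-1)) = 2 * c1 - 2 * c0" using n h[rule_format, of "n-1"] by (simp add: va_n va_n1 va_n1S)
  then have b: "coeff P (2*n-1) = 2 * c1 - 2 * c0" using e by simp
  have "coeff P (2*n - k) = (-1) ^ (k - 1) * coeff P (2*n - 1)" if "1 \<le> k" "k \<le> n" for k
  proof -
    have "n - k \<le> n" by simp
    then have "coeff P (n + (n - k)) = c0 * va n (n - k) + c1 * va (n - 1) (n - k)" using h by blast
    moreover have "n + (n - k) = 2*n - k" "n - (n - k) = k" "n - k \<noteq> n" using that by auto
    moreover have sg: "(-1::real) ^ k = - ((-1) ^ (k - 1))"
    proof -
      have "k = Suc (k - 1)" using that by simp
      then show ?thesis by (metis power_Suc mult_minus1)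
    qed
    moreover have "va n (n - k) = 2 * (-1) ^ k" "va (n - 1) (n - k) = - 2 * (-1) ^ k"
      using that n sg by (simp_all add: va_n va_n1)
    ultimately have x: "coeff P (2*n - k) = (2 * c1 - 2 * c0) * (-1) ^ (k - 1)"
      by (simp add: algebra_simps)
    show ?thesis unfolding x b by simp
  qed
  moreover have "coeff P (2*n) \<noteq> 0" "coeff P (2*n) \<noteq> - coeff P (2*n - 1)" using a b c by auto
  ultimately show ?thesis unfolding classV_def by blast
qed

lemma W_fwd:
  assumes n: "n \<ge> 2" and c: "classW P n"
  shows "coeff P (2*n) / 2 * ((coeff P (2*n-1) - coeff P (2*n)) / 2) \<noteq> 0 \<and> (\<forall>k\<le>n. coeff P (n + k) = coeff P (2*n) / 2 * wa n k + (coeff P (2*n-1) - coeff P (2*n)) / 2 * wa (n - 1) k)"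
proof -
  have h: "\<And>j. n \<le> j \<Longrightarrow> j \<le> 2*n - 1 \<Longrightarrow> coeff P j = coeff P (2*n - 1)"
    and nz: "coeff P (2*n) \<noteq> 0" "coeff P (2*n) \<noteq> coeff P (2*n - 1)"
    using c unfolding classW_def by blast+
  have "coeff P (n + k) = coeff P (2*n) / 2 * wa n k + (coeff P (2*n-1) - coeff P (2*n)) / 2 * wa (n - 1) k" if "k \<le> n" for k
  proof (cases "k = n")
    case True then show ?thesis using n by (simp add: wa_n wa_n1 wa_n1S mult_2)
  next
    case False
    then have "coeff P (n + k) = coeff P (2*n - 1)" using h[of "n + k"] that n by simp
    moreover have "wa n k = 2" "wa (n - 1) k = 2" using False that n by (simp_all add: wa_n wa_n1)
    ultimately show ?thesis by (simp add: diff_divide_distrib)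
  qed
  moreover have "coeff P (2*n-1) - coeff P (2*n) \<noteq> 0" using nz by linarith
  ultimately show ?thesis using nz by simp
qed

lemma W_bwd:
  assumes n: "n \<ge> 2" and c: "c0 * c1 \<noteq> 0" and h: "\<forall>k\<le>n. coeff P (n + k) = c0 * wa n k + c1 * wa (n - 1) k"
  shows "classW P n"
proof -
  have "coeff P (n + n) = 2 * c0" using n h[rule_format, of n] by (simp add: wa_n wa_n1 wa_n1S)
  then have a: "coeff P (2*n) = 2 * c0" by (metis mult_2)
  have e: "n + (n - 1) = 2*n - 1" using n by simp
  have "coeff P (n + (n-1)) = 2 * c0 + 2 * c1" using n h[rule_format, of "n-1"] by (simp add: wa_n wa_n1 wa_n1S)
  then have b: "coeff P (2*n-1) = 2 * c0 + 2 * c1" using e by simp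
  have "coeff P j = coeff P (2*n - 1)" if "n \<le> j" "j \<le> 2*n - 1" for j
  proof -
    have "j - n \<le> n" using that by simp
    then have "coeff P (n + (j - n)) = c0 * wa n (j - n) + c1 * wa (n - 1) (j - n)" using h by blast
    moreover have "n + (j - n) = j" "j - n \<noteq> n" using that n by auto
    ultimately show ?thesis using that n b by (simp add: wa_n wa_n1 wa_n1S)
  qed
  moreover have "coeff P (2*n) \<noteq> 0" "coeff P (2*n) \<noteq> coeff P (2*n - 1)" using a b c by auto
  ultimately show ?thesis unfolding classW_def by blast
qed

theorem mainTheorem1:
  fixes P :: "real poly" and n :: nat
  assumes "n \<ge> 2"
    and "degree P = 2 * n"
    and "self_reciprocal P n"
  shows "(classT P n \<longleftrightarrow> quasi_orth1 chebT n (chebC P n))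
       \<and> (classU P n \<longleftrightarrow> quasi_orth1 chebU n (chebC P n))
       \<and> (classV P n \<longleftrightarrow> quasi_orth1 chebV n (chebC P n))
       \<and> (classW P n \<longleftrightarrow> quasi_orth1 chebW n (chebC P n))
       \<and> (classT P n \<longrightarrow> chebC P n =
            smult (coeff P (2*n)) (chebT n) + smult (coeff P (2*n - 1)) (chebT (n - 1)))
       \<and> (classU P n \<longrightarrow> chebC P n =
            smult (coeff P (2*n) / 2) (chebU n) + smult (coeff P (2*n - 1) / 2) (chebU (n - 1)))
       \<and> (classV P n \<longrightarrow> chebC P n =
            smult (coeff P (2*n) / 2) (chebV n)
            + smult ((coeff P (2*n) + coeff P (2*n - 1)) / 2) (chebV (n - 1)))
       \<and> (classW P n \<longrightarrow> chebC P n =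
            smult (coeff P (2*n) / 2) (chebW n)
            + smult ((coeff P (2*n - 1) - coeff P (2*n)) / 2) (chebW (n - 1)))"
proof -
  have n1: "n \<ge> 2" using assms(1) .
  have CS: "chebC P n = S (\<lambda>k. coeff P (n + k)) n" by (rule chebC_S)
  have zT: "\<And>m k. m < k \<Longrightarrow> ta m k = 0" by (simp add: ta_def)
  have zU: "\<And>m k. m < k \<Longrightarrow> ua m k = 0" by (simp add: ua_def)
  have zV: "\<And>m k. m < k \<Longrightarrow> va m k = 0" by (simp add: va_def)
  have zW: "\<And>m k. m < k \<Longrightarrow> wa m k = 0" by (simp add: wa_def)
  have qT: "quasi_orth1 chebT n (chebC P n) \<longleftrightarrow> (\<exists>c0 c1. c0 * c1 \<noteq> 0 \<and> (\<forall>k\<le>n. coeff P (n + k) = c0 * ta n k + c1 * ta (n - 1) k))"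
    unfolding CS by (rule qo_S) (simp_all add: T_S zT)
  have qU: "quasi_orth1 chebU n (chebC P n) \<longleftrightarrow> (\<exists>c0 c1. c0 * c1 \<noteq> 0 \<and> (\<forall>k\<le>n. coeff P (n + k) = c0 * ua n k + c1 * ua (n - 1) k))"
    unfolding CS by (rule qo_S) (simp_all add: U_S zU)
  have qV: "quasi_orth1 chebV n (chebC P n) \<longleftrightarrow> (\<exists>c0 c1. c0 * c1 \<noteq> 0 \<and> (\<forall>k\<le>n. coeff P (n + k) = c0 * va n k + c1 * va (n - 1) k))"
    unfolding CS by (rule qo_S) (simp_all add: V_S zV)
  have qW: "quasi_orth1 chebW n (chebC P n) \<longleftrightarrow> (\<exists>c0 c1. c0 * c1 \<noteq> 0 \<and> (\<forall>k\<le>n. coeff P (n + k) = c0 * wa n k + c1 * wa (n - 1) k))"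
    unfolding CS by (rule qo_S) (simp_all add: W_S zW)
  have eT: "chebC P n = smult c0 (chebT n) + smult c1 (chebT (n - 1))"
    if "\<forall>k\<le>n. coeff P (n + k) = c0 * ta n k + c1 * ta (n - 1) k" for c0 c1
  proof -
    have "smult c0 (chebT n) + smult c1 (chebT (n - 1)) = S (\<lambda>k. c0 * ta n k + c1 * ta (n - 1) k) n"
      by (rule qo_comb[of chebT ta]) (simp_all add: T_S zT)
    moreover have "S (\<lambda>k. coeff P (n + k)) n = S (\<lambda>k. c0 * ta n k + c1 * ta (n - 1) k) n"
      using that by (intro S_cong) auto
    ultimately show ?thesis unfolding CS by simp
  qed
  have eU: "chebC P n = smult c0 (chebU n) + smult c1 (chebU (n - 1))"
    if "\<forall>k\<le>n. coeff P (n + k) = c0 * ua n k + c1 * ua (n - 1) k" for c0 c1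
  proof -
    have "smult c0 (chebU n) + smult c1 (chebU (n - 1)) = S (\<lambda>k. c0 * ua n k + c1 * ua (n - 1) k) n"
      by (rule qo_comb[of chebU ua]) (simp_all add: U_S zU)
    moreover have "S (\<lambda>k. coeff P (n + k)) n = S (\<lambda>k. c0 * ua n k + c1 * ua (n - 1) k) n"
      using that by (intro S_cong) auto
    ultimately show ?thesis unfolding CS by simp
  qed
  have eV: "chebC P n = smult c0 (chebV n) + smult c1 (chebV (n - 1))"
    if "\<forall>k\<le>n. coeff P (n + k) = c0 * va n k + c1 * va (n - 1) k" for c0 c1
  proof -
    have "smult c0 (chebV n) + smult c1 (chebV (n - 1)) = S (\<lambda>k. c0 * va n k + c1 * va (n - 1) k) n"
      by (rule qo_comb[of chebV va]) (simp_all add: V_S zV)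
    moreover have "S (\<lambda>k. coeff P (n + k)) n = S (\<lambda>k. c0 * va n k + c1 * va (n - 1) k) n"
      using that by (intro S_cong) auto
    ultimately show ?thesis unfolding CS by simp
  qed
  have eW: "chebC P n = smult c0 (chebW n) + smult c1 (chebW (n - 1))"
    if "\<forall>k\<le>n. coeff P (n + k) = c0 * wa n k + c1 * wa (n - 1) k" for c0 c1
  proof -
    have "smult c0 (chebW n) + smult c1 (chebW (n - 1)) = S (\<lambda>k. c0 * wa n k + c1 * wa (n - 1) k) n"
      by (rule qo_comb[of chebW wa]) (simp_all add: W_S zW)
    moreover have "S (\<lambda>k. coeff P (n + k)) n = S (\<lambda>k. c0 * wa n k + c1 * wa (n - 1) k) n"
      using that by (intro S_cong) auto
    ultimately show ?thesis unfolding CS by simp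
  qed
  have 1: "classT P n \<longleftrightarrow> quasi_orth1 chebT n (chebC P n)"
  proof
    assume c: "classT P n"
    show "quasi_orth1 chebT n (chebC P n)" unfolding qT
      by (rule exI[of _ "coeff P (2*n)"], rule exI[of _ "coeff P (2*n-1)"], rule T_fwd[OF n1 c])
  next
    assume "quasi_orth1 chebT n (chebC P n)"
    then obtain c0 c1 where "c0 * c1 \<noteq> 0" "\<forall>k\<le>n. coeff P (n + k) = c0 * ta n k + c1 * ta (n - 1) k"
      unfolding qT by blast
    then show "classT P n" by (rule T_bwd[OF n1])
  qed
  have 2: "classU P n \<longleftrightarrow> quasi_orth1 chebU n (chebC P n)"
  proof
    assume c: "classU P n"
    show "quasi_orth1 chebU n (chebC P n)" unfolding qU
      by (rule exI[of _ "coeff P (2*n) / 2"], rule exI[of _ "coeff P (2*n-1) / 2"], rule U_fwd[OF n1 c])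
  next
    assume "quasi_orth1 chebU n (chebC P n)"
    then obtain c0 c1 where "c0 * c1 \<noteq> 0" "\<forall>k\<le>n. coeff P (n + k) = c0 * ua n k + c1 * ua (n - 1) k"
      unfolding qU by blast
    then show "classU P n" by (rule U_bwd[OF n1])
  qed
  have 3: "classV P n \<longleftrightarrow> quasi_orth1 chebV n (chebC P n)"
  proof
    assume c: "classV P n"
    show "quasi_orth1 chebV n (chebC P n)" unfolding qV
      by (rule exI[of _ "coeff P (2*n) / 2"], rule exI[of _ "(coeff P (2*n) + coeff P (2*n-1)) / 2"], rule V_fwd[OF n1 c])
  next
    assume "quasi_orth1 chebV n (chebC P n)"
    then obtain c0 c1 where "c0 * c1 \<noteq> 0" "\<forall>k\<le>n. coeff P (n + k) = c0 * va n k + c1 * va (n - 1) k"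
      unfolding qV by blast
    then show "classV P n" by (rule V_bwd[OF n1])
  qed
  have 4: "classW P n \<longleftrightarrow> quasi_orth1 chebW n (chebC P n)"
  proof
    assume c: "classW P n"
    show "quasi_orth1 chebW n (chebC P n)" unfolding qW
      by (rule exI[of _ "coeff P (2*n) / 2"], rule exI[of _ "(coeff P (2*n-1) - coeff P (2*n)) / 2"], rule W_fwd[OF n1 c])
  next
    assume "quasi_orth1 chebW n (chebC P n)"
    then obtain c0 c1 where "c0 * c1 \<noteq> 0" "\<forall>k\<le>n. coeff P (n + k) = c0 * wa n k + c1 * wa (n - 1) k"
      unfolding qW by blast
    then show "classW P n" by (rule W_bwd[OF n1])
  qed
  have 5: "classT P n \<longrightarrow> chebC P n =
            smult (coeff P (2*n)) (chebT n) + smult (coeff P (2*n - 1)) (chebT (n - 1))"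
  proof
    assume c: "classT P n"
    show "chebC P n =
            smult (coeff P (2*n)) (chebT n) + smult (coeff P (2*n - 1)) (chebT (n - 1))"
      by (rule eT) (rule conjunct2[OF T_fwd[OF n1 c]])
  qed
  have 6: "classU P n \<longrightarrow> chebC P n =
            smult (coeff P (2*n) / 2) (chebU n) + smult (coeff P (2*n - 1) / 2) (chebU (n - 1))"
  proof
    assume c: "classU P n"
    show "chebC P n =
            smult (coeff P (2*n) / 2) (chebU n) + smult (coeff P (2*n - 1) / 2) (chebU (n - 1))"
      by (rule eU) (rule conjunct2[OF U_fwd[OF n1 c]])
  qed
  have 7: "classV P n \<longrightarrow> chebC P n =
            smult (coeff P (2*n) / 2) (chebV n)
            + smult ((coeff P (2*n) + coeff P (2*n - 1)) / 2) (chebV (n - 1))"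
  proof
    assume c: "classV P n"
    show "chebC P n =
            smult (coeff P (2*n) / 2) (chebV n)
            + smult ((coeff P (2*n) + coeff P (2*n - 1)) / 2) (chebV (n - 1))"
      by (rule eV) (rule conjunct2[OF V_fwd[OF n1 c]])
  qed
  have 8: "classW P n \<longrightarrow> chebC P n =
            smult (coeff P (2*n) / 2) (chebW n)
            + smult ((coeff P (2*n - 1) - coeff P (2*n)) / 2) (chebW (n - 1))"
  proof
    assume c: "classW P n"
    show "chebC P n =
            smult (coeff P (2*n) / 2) (chebW n)
            + smult ((coeff P (2*n - 1) - coeff P (2*n)) / 2) (chebW (n - 1))"
      by (rule eW) (rule conjunct2[OF W_fwd[OF n1 c]])
  qed
  show ?thesis using 1 2 3 4 5 6 7 8 by blast
qed

end
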